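(* Let $G$ be a cubical $\omega$-category with connections and $n\ge1$. Let $\Phi_n:\square G_{n-1}\to\square G_{n-1}$ be $\Phi_n=\psi_1(\psi_2\psi_1)(\psi_3\psi_2\psi_1)\cdots(\psi_{n-1}\cdots\psi_1)$, with $\psi_j$ acting on shells as described in the context. Then $x\mapsto(\partial x,\Phi_nx)$ is a bijection from $G_n$ to the pull-back $\{(z,y)\in\square G_{n-1}\times\Phi_n(G_n):\Phi_nz=\partial y\}$.
   Context: A cubical $\omega$-category with connections $G$ consists of sets $G_n$ ($n\ge0$), face maps $\partial^\alpha_i:G_n\to G_{n-1}$, degeneracies $\varepsilon_i:G_{n-1}\to G_n$, connections $\Gamma^\alpha_i:G_n\to G_{n+1}$ ($1\le i\le n$, $\alpha=\pm$) and partial compositions $\circ_j$ on $G_n$ ($1\le j\le n$, $a\circ_jb$ defined iff $\partial^+_ja=\partial^-_jb$) satisfying: $\partial^\alpha_i\partial^\beta_j=\partial^\beta_{j-1}\partial^\alpha_i$ ($i<j$), $\varepsilon_i\varepsilon_j=\varepsilon_{j+1}\varepsilon_i$ ($i\le j$), $\partial^\alpha_i\varepsilon_j=\varepsilon_{j-1}\partial^\alpha_i$ ($i<j$), $\varepsilon_j\partial^\alpha_{i-1}$ ($i>j$), $\mathrm{id}$ ($i=j$); $\Gamma^\alpha_i\Gamma^\beta_j=\Gamma^\beta_{j+1}\Gamma^\alpha_i$ ($i<j$), $\Gamma^\alpha_i\Gamma^\alpha_i=\Gamma^\alpha_{i+1}\Gamma^\alpha_i$, $\Gamma^\alpha_i\varepsilon_j=\varepsilon_{j+1}\Gamma^\alpha_i$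 ($i<j$), $\varepsilon_j\Gamma^\alpha_{i-1}$ ($i>j$), $\Gamma^\alpha_j\varepsilon_j=\varepsilon_{j+1}\varepsilon_j$, $\partial^\alpha_i\Gamma^\beta_j=\Gamma^\beta_{j-1}\partial^\alpha_i$ ($i<j$), $\Gamma^\beta_j\partial^\alpha_{i-1}$ ($i>j+1$), $\partial^\alpha_j\Gamma^\alpha_j=\partial^\alpha_{j+1}\Gamma^\alpha_j=\mathrm{id}$, $\partial^\alpha_j\Gamma^{-\alpha}_j=\partial^\alpha_{j+1}\Gamma^{-\alpha}_j=\varepsilon_j\partial^\alpha_j$; $\partial^-_j(a\circ_jb)=\partial^-_ja$, $\partial^+_j(a\circ_jb)=\partial^+_jb$, $\partial^\alpha_i(a\circ_jb)=\partial^\alpha_ia\circ_{j-1}\partial^\alpha_ib$ ($i<j$), $\partial^\alpha_ia\circ_j\partial^\alpha_ib$ ($i>j$); interchange $(a\circ_ib)\circ_j(c\circ_id)=(a\circ_jc)\circ_i(b\circ_jd)$ for $i\ne j$; $\varepsilon_i(a\circ_jb)=\varepsilon_ia\circ_{j+1}\varepsilon_ib$ ($i\le j$), $\varepsilon_ia\circ_j\varepsilon_ib$ ($i>j$); $\Gamma^\alpha_i(a\circ_jb)=\Gamma^\alpha_ia\circ_{j+1}\Gamma^\alpha_ib$ ($i<j$), $\Gamma^\alpha_ia\circ_j\Gamma^\alpha_ib$ ($i>j$); $\Gamma^+_j(a\circ_jb)=(\Gamma^+_ja\circ_j\varepsilon_ja)\circ_{j+1}(\varepsilon_{j+1}a\circ_j\Gamma^+_jb)$,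 $\Gamma^-_j(a\circ_jb)=(\Gamma^-_ja\circ_j\varepsilon_{j+1}b)\circ_{j+1}(\varepsilon_jb\circ_j\Gamma^-_jb)$; each $\circ_j$ is a category structure with identities $\varepsilon_jy$; $\Gamma^+_ix\circ_i\Gamma^-_ix=\varepsilon_{i+1}x$, $\Gamma^+_ix\circ_{i+1}\Gamma^-_ix=\varepsilon_ix$. Folding operations on $G_m$: $\psi_ix=\Gamma^+_i\partial^-_{i+1}x\circ_{i+1}x\circ_{i+1}\Gamma^-_i\partial^+_{i+1}x$ ($1\le i\le m-1$), $\Psi_r=\psi_{r-1}\cdots\psi_1$, $\Phi_n=\Psi_1\Psi_2\cdots\Psi_n$. An $n$-shell is a $2n$-tuple $z=(z^-_1,z^+_1,\dots,z^-_n,z^+_n)$ of elements of $G_{n-1}$ with $\partial^\alpha_iz^\beta_j=\partial^\beta_{j-1}z^\alpha_i$ for $i<j$; $\square G_{n-1}$ is the set of $n$-shells, and $\partial:G_n\to\square G_{n-1}$ is $\partial x=(\partial^-_1x,\partial^+_1x,\dots,\partial^-_nx,\partial^+_nx)$. For $1\le j\le n-1$ the map $\psi_j:\square G_{n-1}\to\square G_{n-1}$ sends $z$ to $w$ with $w^\alpha_i=\psi_{j-1}z^\alpha_i$ ($i<j$), $w^-_j=z^-_j\circ_jz^+_{j+1}$, $w^+_j=z^-_{j+1}\circ_jz^+_j$, $w^\alpha_{j+1}=\varepsilon_j\partial^\alpha_jz^\alpha_{j+1}$, $w^\alpha_i=\psi_jz^\alpha_i$ ($i>j+1$); this is a well-defined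 map of shells satisfying $\psi_j\partial=\partial\psi_j$. *)

theory Defs
  imports Main
begin

text \<open>Elements of all dimensions live in one type 'a; the set of
 n-cubes is G n. All structure maps are indexed by the dimension of their
 (first) argument. Signs: False = minus, True = plus.
  d n i \<alpha> x  : face  \<partial>^\<alpha>_i : G n \<rightarrow> G (n-1),      1 \<le> i \<le> n
  e n i x    : degeneracy \<epsilon>_i : G n \<rightarrow> G (n+1),  1 \<le> i \<le> n+1
  gm n i \<alpha> x : connection \<Gamma>^\<alpha>_i : G n \<rightarrow> G (n+1), 1 \<le> i \<le> n
  cp n j a b : a \<circ>_j b in G n (1 \<le> j \<le> n), defined iff d n j True a = d n j False b\<close>

locale cubical_conn =
  fixes G :: "nat \<Rightarrow> 'a set"
    and d :: "nat \<Rightarrow> nat \<Rightarrow> bool \<Rightarrow> 'a \<Rightarrow> 'a"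
    and e :: "nat \<Rightarrow> nat \<Rightarrow> 'a \<Rightarrow> 'a"
    and gm :: "nat \<Rightarrow> nat \<Rightarrow> bool \<Rightarrow> 'a \<Rightarrow> 'a"
    and cp :: "nat \<Rightarrow> nat \<Rightarrow> 'a \<Rightarrow> 'a \<Rightarrow> 'a"
  assumes d_closed: "\<And>n i \<alpha> x. x \<in> G n \<Longrightarrow> 1 \<le> i \<Longrightarrow> i \<le> n \<Longrightarrow> d n i \<alpha> x \<in> G (n - 1)"
    and e_closed: "\<And>n i x. x \<in> G n \<Longrightarrow> 1 \<le> i \<Longrightarrow> i \<le> Suc n \<Longrightarrow> e n i x \<in> G (Suc n)"
    and gm_closed: "\<And>n i \<alpha> x. x \<in> G n \<Longrightarrow> 1 \<le> i \<Longrightarrow> i \<le> n \<Longrightarrow> gm n i \<alpha> x \<in> G (Suc n)"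
    and cp_closed: "\<And>n j a b. a \<in> G n \<Longrightarrow> b \<in> G n \<Longrightarrow> 1 \<le> j \<Longrightarrow> j \<le> n \<Longrightarrow>
         d n j True a = d n j False b \<Longrightarrow> cp n j a b \<in> G n"
    and dd: "\<And>n i j \<alpha> \<beta> x. x \<in> G n \<Longrightarrow> 1 \<le> i \<Longrightarrow> i < j \<Longrightarrow> j \<le> n \<Longrightarrow>
         d (n - 1) i \<alpha> (d n j \<beta> x) = d (n - 1) (j - 1) \<beta> (d n i \<alpha> x)"
    and ee: "\<And>m i j x. x \<in> G m \<Longrightarrow> 1 \<le> i \<Longrightarrow> i \<le> j \<Longrightarrow> j \<le> Suc m \<Longrightarrow>
         e (Suc m) i (e m j x) = e (Suc m) (Suc j) (e m i x)"
    and de_lt: "\<And>m i j \<alpha> x. x \<in> G m \<Longrightarrow> 1 \<le> i \<Longrightarrow> i < j \<Longrightarrow> j \<le> Suc m \<Longrightarrow>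
         d (Suc m) i \<alpha> (e m j x) = e (m - 1) (j - 1) (d m i \<alpha> x)"
    and de_gt: "\<And>m i j \<alpha> x. x \<in> G m \<Longrightarrow> 1 \<le> j \<Longrightarrow> j < i \<Longrightarrow> i \<le> Suc m \<Longrightarrow>
         d (Suc m) i \<alpha> (e m j x) = e (m - 1) j (d m (i - 1) \<alpha> x)"
    and de_eq: "\<And>m j \<alpha> x. x \<in> G m \<Longrightarrow> 1 \<le> j \<Longrightarrow> j \<le> Suc m \<Longrightarrow>
         d (Suc m) j \<alpha> (e m j x) = x"
    and gg_lt: "\<And>n i j \<alpha> \<beta> x. x \<in> G n \<Longrightarrow> 1 \<le> i \<Longrightarrow> i < j \<Longrightarrow> j \<le> n \<Longrightarrow>
         gm (Suc n) i \<alpha> (gm n j \<beta> x) = gm (Suc n) (Suc j) \<beta> (gm n i \<alpha> x)"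
    and gg_eq: "\<And>n i \<alpha> x. x \<in> G n \<Longrightarrow> 1 \<le> i \<Longrightarrow> i \<le> n \<Longrightarrow>
         gm (Suc n) i \<alpha> (gm n i \<alpha> x) = gm (Suc n) (Suc i) \<alpha> (gm n i \<alpha> x)"
    and ge_lt: "\<And>m i j \<alpha> x. x \<in> G m \<Longrightarrow> 1 \<le> i \<Longrightarrow> i < j \<Longrightarrow> j \<le> Suc m \<Longrightarrow>
         gm (Suc m) i \<alpha> (e m j x) = e (Suc m) (Suc j) (gm m i \<alpha> x)"
    and ge_gt: "\<And>m i j \<alpha> x. x \<in> G m \<Longrightarrow> 1 \<le> j \<Longrightarrow> j < i \<Longrightarrow> i \<le> Suc m \<Longrightarrow>
         gm (Suc m) i \<alpha> (e m j x) = e (Suc m) j (gm m (i - 1) \<alpha> x)"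
    and ge_eq: "\<And>m j \<alpha> x. x \<in> G m \<Longrightarrow> 1 \<le> j \<Longrightarrow> j \<le> Suc m \<Longrightarrow>
         gm (Suc m) j \<alpha> (e m j x) = e (Suc m) (Suc j) (e m j x)"
    and dg_lt: "\<And>n i j \<alpha> \<beta> x. x \<in> G n \<Longrightarrow> 1 \<le> i \<Longrightarrow> i < j \<Longrightarrow> j \<le> n \<Longrightarrow>
         d (Suc n) i \<alpha> (gm n j \<beta> x) = gm (n - 1) (j - 1) \<beta> (d n i \<alpha> x)"
    and dg_gt: "\<And>n i j \<alpha> \<beta> x. x \<in> G n \<Longrightarrow> 1 \<le> j \<Longrightarrow> Suc j < i \<Longrightarrow> i \<le> Suc n \<Longrightarrow>
         d (Suc n) i \<alpha> (gm n j \<beta> x) = gm (n - 1) j \<beta> (d n (i - 1) \<alpha> x)"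
    and dg_same1: "\<And>n j \<alpha> x. x \<in> G n \<Longrightarrow> 1 \<le> j \<Longrightarrow> j \<le> n \<Longrightarrow>
         d (Suc n) j \<alpha> (gm n j \<alpha> x) = x"
    and dg_same2: "\<And>n j \<alpha> x. x \<in> G n \<Longrightarrow> 1 \<le> j \<Longrightarrow> j \<le> n \<Longrightarrow>
         d (Suc n) (Suc j) \<alpha> (gm n j \<alpha> x) = x"
    and dg_opp1: "\<And>n j \<alpha> x. x \<in> G n \<Longrightarrow> 1 \<le> j \<Longrightarrow> j \<le> n \<Longrightarrow>
         d (Suc n) j \<alpha> (gm n j (\<not> \<alpha>) x) = e (n - 1) j (d n j \<alpha> x)"
    and dg_opp2: "\<And>n j \<alpha> x. x \<in> G n \<Longrightarrow> 1 \<le> j \<Longrightarrow> j \<le> n \<Longrightarrow>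
         d (Suc n) (Suc j) \<alpha> (gm n j (\<not> \<alpha>) x) = e (n - 1) j (d n j \<alpha> x)"
    and d_cp_minus: "\<And>n j a b. a \<in> G n \<Longrightarrow> b \<in> G n \<Longrightarrow> 1 \<le> j \<Longrightarrow> j \<le> n \<Longrightarrow>
         d n j True a = d n j False b \<Longrightarrow> d n j False (cp n j a b) = d n j False a"
    and d_cp_plus: "\<And>n j a b. a \<in> G n \<Longrightarrow> b \<in> G n \<Longrightarrow> 1 \<le> j \<Longrightarrow> j \<le> n \<Longrightarrow>
         d n j True a = d n j False b \<Longrightarrow> d n j True (cp n j a b) = d n j True b"
    and d_cp_lt: "\<And>n i j \<alpha> a b. a \<in> G n \<Longrightarrow> b \<in> G n \<Longrightarrow> 1 \<le> i \<Longrightarrow> i < j \<Longrightarrow> j \<le> n \<Longrightarrow>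
         d n j True a = d n j False b \<Longrightarrow>
         d n i \<alpha> (cp n j a b) = cp (n - 1) (j - 1) (d n i \<alpha> a) (d n i \<alpha> b)"
    and d_cp_gt: "\<And>n i j \<alpha> a b. a \<in> G n \<Longrightarrow> b \<in> G n \<Longrightarrow> 1 \<le> j \<Longrightarrow> j < i \<Longrightarrow> i \<le> n \<Longrightarrow>
         d n j True a = d n j False b \<Longrightarrow>
         d n i \<alpha> (cp n j a b) = cp (n - 1) j (d n i \<alpha> a) (d n i \<alpha> b)"
    and interchange: "\<And>n i j a b c x. a \<in> G n \<Longrightarrow> b \<in> G n \<Longrightarrow> c \<in> G n \<Longrightarrow> x \<in> G n \<Longrightarrow>
         1 \<le> i \<Longrightarrow> i \<le> n \<Longrightarrow> 1 \<le> j \<Longrightarrow> j \<le> n \<Longrightarrow> i \<noteq> j \<Longrightarrow>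
         d n i True a = d n i False b \<Longrightarrow> d n i True c = d n i False x \<Longrightarrow>
         d n j True a = d n j False c \<Longrightarrow> d n j True b = d n j False x \<Longrightarrow>
         cp n j (cp n i a b) (cp n i c x) = cp n i (cp n j a c) (cp n j b x)"
    and e_cp_le: "\<And>n i j a b. a \<in> G n \<Longrightarrow> b \<in> G n \<Longrightarrow> 1 \<le> i \<Longrightarrow> i \<le> j \<Longrightarrow> j \<le> n \<Longrightarrow>
         d n j True a = d n j False b \<Longrightarrow>
         e n i (cp n j a b) = cp (Suc n) (Suc j) (e n i a) (e n i b)"
    and e_cp_gt: "\<And>n i j a b. a \<in> G n \<Longrightarrow> b \<in> G n \<Longrightarrow> 1 \<le> j \<Longrightarrow> j < i \<Longrightarrow> i \<le> Suc n \<Longrightarrow>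
         d n j True a = d n j False b \<Longrightarrow>
         e n i (cp n j a b) = cp (Suc n) j (e n i a) (e n i b)"
    and g_cp_lt: "\<And>n i j \<alpha> a b. a \<in> G n \<Longrightarrow> b \<in> G n \<Longrightarrow> 1 \<le> i \<Longrightarrow> i < j \<Longrightarrow> j \<le> n \<Longrightarrow>
         d n j True a = d n j False b \<Longrightarrow>
         gm n i \<alpha> (cp n j a b) = cp (Suc n) (Suc j) (gm n i \<alpha> a) (gm n i \<alpha> b)"
    and g_cp_gt: "\<And>n i j \<alpha> a b. a \<in> G n \<Longrightarrow> b \<in> G n \<Longrightarrow> 1 \<le> j \<Longrightarrow> j < i \<Longrightarrow> i \<le> n \<Longrightarrow>
         d n j True a = d n j False b \<Longrightarrow>
         gm n i \<alpha> (cp n j a b) = cp (Suc n) j (gm n i \<alpha> a) (gm n i \<alpha> b)"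
    and g_cp_plus: "\<And>n j a b. a \<in> G n \<Longrightarrow> b \<in> G n \<Longrightarrow> 1 \<le> j \<Longrightarrow> j \<le> n \<Longrightarrow>
         d n j True a = d n j False b \<Longrightarrow>
         gm n j True (cp n j a b) =
           cp (Suc n) (Suc j) (cp (Suc n) j (gm n j True a) (e n j a))
                              (cp (Suc n) j (e n (Suc j) a) (gm n j True b))"
    and g_cp_minus: "\<And>n j a b. a \<in> G n \<Longrightarrow> b \<in> G n \<Longrightarrow> 1 \<le> j \<Longrightarrow> j \<le> n \<Longrightarrow>
         d n j True a = d n j False b \<Longrightarrow>
         gm n j False (cp n j a b) =
           cp (Suc n) (Suc j) (cp (Suc n) j (gm n j False a) (e n (Suc j) b))
                              (cp (Suc n) j (e n j b) (gm n j False b))"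
    and cp_assoc: "\<And>n j a b c. a \<in> G n \<Longrightarrow> b \<in> G n \<Longrightarrow> c \<in> G n \<Longrightarrow> 1 \<le> j \<Longrightarrow> j \<le> n \<Longrightarrow>
         d n j True a = d n j False b \<Longrightarrow> d n j True b = d n j False c \<Longrightarrow>
         cp n j (cp n j a b) c = cp n j a (cp n j b c)"
    and cp_left_id: "\<And>n j a. a \<in> G n \<Longrightarrow> 1 \<le> j \<Longrightarrow> j \<le> n \<Longrightarrow>
         cp n j (e (n - 1) j (d n j False a)) a = a"
    and cp_right_id: "\<And>n j a. a \<in> G n \<Longrightarrow> 1 \<le> j \<Longrightarrow> j \<le> n \<Longrightarrow>
         cp n j a (e (n - 1) j (d n j True a)) = a"
    and conn_inv1: "\<And>n i x. x \<in> G n \<Longrightarrow> 1 \<le> i \<Longrightarrow> i \<le> n \<Longrightarrow>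
         cp (Suc n) i (gm n i True x) (gm n i False x) = e n (Suc i) x"
    and conn_inv2: "\<And>n i x. x \<in> G n \<Longrightarrow> 1 \<le> i \<Longrightarrow> i \<le> n \<Longrightarrow>
         cp (Suc n) (Suc i) (gm n i True x) (gm n i False x) = e n i x"

definition psi :: "(nat \<Rightarrow> nat \<Rightarrow> bool \<Rightarrow> 'a \<Rightarrow> 'a) \<Rightarrow> (nat \<Rightarrow> nat \<Rightarrow> bool \<Rightarrow> 'a \<Rightarrow> 'a)
    \<Rightarrow> (nat \<Rightarrow> nat \<Rightarrow> 'a \<Rightarrow> 'a \<Rightarrow> 'a) \<Rightarrow> nat \<Rightarrow> nat \<Rightarrow> 'a \<Rightarrow> 'a" where
  "psi d gm cp m i x =
     cp m (Suc i) (cp m (Suc i) (gm (m - 1) i True (d m (Suc i) False x)) x)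
                  (gm (m - 1) i False (d m (Suc i) True x))"

text \<open>Generic composites: Psi_gen f r = f (r-1) o ... o f 1 (f 1 applied first);
 Phi_gen f n = Psi_1 o Psi_2 o ... o Psi_n (Psi_n applied first).\<close>
definition Psi_gen :: "(nat \<Rightarrow> 'b \<Rightarrow> 'b) \<Rightarrow> nat \<Rightarrow> 'b \<Rightarrow> 'b" where
  "Psi_gen f r = fold f [1..<r]"

definition Phi_gen :: "(nat \<Rightarrow> 'b \<Rightarrow> 'b) \<Rightarrow> nat \<Rightarrow> 'b \<Rightarrow> 'b" where
  "Phi_gen f n = fold (Psi_gen f) (rev [1..<Suc n])"

text \<open>Shells: an n-shell (z^-_1, z^+_1, ..., z^-_n, z^+_n) is represented as the list
 [(z^-_1, z^+_1), ..., (z^-_n, z^+_n)].\<close>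
definition sh :: "('a \<times> 'a) list \<Rightarrow> nat \<Rightarrow> bool \<Rightarrow> 'a" where
  "sh z i \<alpha> = (if \<alpha> then snd (z ! (i - 1)) else fst (z ! (i - 1)))"

definition shells :: "(nat \<Rightarrow> 'a set) \<Rightarrow> (nat \<Rightarrow> nat \<Rightarrow> bool \<Rightarrow> 'a \<Rightarrow> 'a) \<Rightarrow> nat
    \<Rightarrow> ('a \<times> 'a) list set" where
  "shells G d n = {z. length z = n \<and>
      (\<forall>i \<alpha>. 1 \<le> i \<and> i \<le> n \<longrightarrow> sh z i \<alpha> \<in> G (n - 1)) \<and>
      (\<forall>i j \<alpha> \<beta>. 1 \<le> i \<and> i < j \<and> j \<le> n \<longrightarrow>
          d (n - 1) i \<alpha> (sh z j \<beta>) = d (n - 1) (j - 1) \<beta> (sh z i \<alpha>))}"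

definition bd :: "(nat \<Rightarrow> nat \<Rightarrow> bool \<Rightarrow> 'a \<Rightarrow> 'a) \<Rightarrow> nat \<Rightarrow> 'a \<Rightarrow> ('a \<times> 'a) list" where
  "bd d n x = map (\<lambda>i. (d n i False x, d n i True x)) [1..<Suc n]"

definition psi_sh :: "(nat \<Rightarrow> nat \<Rightarrow> bool \<Rightarrow> 'a \<Rightarrow> 'a) \<Rightarrow> (nat \<Rightarrow> nat \<Rightarrow> 'a \<Rightarrow> 'a)
    \<Rightarrow> (nat \<Rightarrow> nat \<Rightarrow> bool \<Rightarrow> 'a \<Rightarrow> 'a) \<Rightarrow> (nat \<Rightarrow> nat \<Rightarrow> 'a \<Rightarrow> 'a \<Rightarrow> 'a)
    \<Rightarrow> nat \<Rightarrow> nat \<Rightarrow> ('a \<times> 'a) list \<Rightarrow> ('a \<times> 'a) list" where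
  "psi_sh d e gm cp n j z =
     (let w = (\<lambda>i \<alpha>.
         if i < j then psi d gm cp (n - 1) (j - 1) (sh z i \<alpha>)
         else if i = j then
           (if \<alpha> then cp (n - 1) j (sh z (Suc j) False) (sh z j True)
            else cp (n - 1) j (sh z j False) (sh z (Suc j) True))
         else if i = Suc j then e (n - 2) j (d (n - 1) j \<alpha> (sh z (Suc j) \<alpha>))
         else psi d gm cp (n - 1) j (sh z i \<alpha>))
      in map (\<lambda>i. (w i False, w i True)) [1..<Suc n])"

definition Phi :: "(nat \<Rightarrow> nat \<Rightarrow> bool \<Rightarrow> 'a \<Rightarrow> 'a) \<Rightarrow> (nat \<Rightarrow> nat \<Rightarrow> bool \<Rightarrow> 'a \<Rightarrow> 'a)
    \<Rightarrow> (nat \<Rightarrow> nat \<Rightarrow> 'a \<Rightarrow> 'a \<Rightarrow> 'a) \<Rightarrow> nat \<Rightarrow> 'a \<Rightarrow> 'a" where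
  "Phi d gm cp n = Phi_gen (psi d gm cp n) n"

definition Phi_sh :: "(nat \<Rightarrow> nat \<Rightarrow> bool \<Rightarrow> 'a \<Rightarrow> 'a) \<Rightarrow> (nat \<Rightarrow> nat \<Rightarrow> 'a \<Rightarrow> 'a)
    \<Rightarrow> (nat \<Rightarrow> nat \<Rightarrow> bool \<Rightarrow> 'a \<Rightarrow> 'a) \<Rightarrow> (nat \<Rightarrow> nat \<Rightarrow> 'a \<Rightarrow> 'a \<Rightarrow> 'a)
    \<Rightarrow> nat \<Rightarrow> ('a \<times> 'a) list \<Rightarrow> ('a \<times> 'a) list" where
  "Phi_sh d e gm cp n = Phi_gen (psi_sh d e gm cp n) n"

end

theory Submission imports Defs begin

lemma sh_map: "1 \<le> i \<Longrightarrow> i \<le> n \<Longrightarrow> sh (map (\<lambda>i. (w i False, w i True)) [1..<Suc n]) i \<alpha> = w i \<alpha>"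
  proof -
  assume "1 \<le> i" "i \<le> n"
  then have "[1..<Suc n] ! (i - 1) = i" by (subst nth_upt) auto
  moreover have "i - 1 < length [1..<Suc n]" using \<open>1 \<le> i\<close> \<open>i \<le> n\<close> by simp
  ultimately show ?thesis unfolding sh_def nth_map[OF \<open>i - 1 < length [1..<Suc n]\<close>] by simp
qed

lemma sh_bd: "1 \<le> i \<Longrightarrow> i \<le> n \<Longrightarrow> sh (bd d n x) i \<alpha> = d n i \<alpha> x"
  unfolding bd_def using sh_map[where w="\<lambda>i \<alpha>. d n i \<alpha> x"] by simp

lemma len_bd[simp]: "length (bd d n x) = n" by (simp add: bd_def)
lemma len_psi_sh[simp]: "length (psi_sh d e gm cp n j z) = n" by (simp add: psi_sh_def Let_def)

lemma list_eq_sh: assumes "length z = n" "length z' = n"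
  "\<And>i \<alpha>. 1 \<le> i \<Longrightarrow> i \<le> n \<Longrightarrow> sh z i \<alpha> = sh z' i \<alpha>" shows "z = z'"
proof (rule nth_equalityI)
  show "length z = length z'" using assms by simp
  fix k assume k: "k < length z"
  have "sh z (Suc k) False = sh z' (Suc k) False" "sh z (Suc k) True = sh z' (Suc k) True"
    using assms k by auto
  then show "z ! k = z' ! k" by (simp add: sh_def prod_eq_iff)
qed

lemma sh_psi_sh: "1 \<le> i \<Longrightarrow> i \<le> n \<Longrightarrow> sh (psi_sh d e gm cp n j z) i \<alpha> =
  (if i < j then psi d gm cp (n - 1) (j - 1) (sh z i \<alpha>)
   else if i = j then (if \<alpha> then cp (n - 1) j (sh z (Suc j) False) (sh z j True)
                       else cp (n - 1) j (sh z j False) (sh z (Suc j) True))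
   else if i = Suc j then e (n - 2) j (d (n - 1) j \<alpha> (sh z (Suc j) \<alpha>))
   else psi d gm cp (n - 1) j (sh z i \<alpha>))"
  unfolding psi_sh_def Let_def by (subst sh_map) auto

context cubical_conn begin

lemma dG: "x \<in> G (Suc m) \<Longrightarrow> 1 \<le> i \<Longrightarrow> i \<le> Suc m \<Longrightarrow> d (Suc m) i \<alpha> x \<in> G m"
  using d_closed[of x "Suc m" i \<alpha>] by simp

lemma dg_opp1F: "x \<in> G m \<Longrightarrow> 1 \<le> j \<Longrightarrow> j \<le> m \<Longrightarrow> d (Suc m) j False (gm m j True x) = e (m - 1) j (d m j False x)"
  using dg_opp1[of x m j False] by simp
lemma dg_opp1T: "x \<in> G m \<Longrightarrow> 1 \<le> j \<Longrightarrow> j \<le> m \<Longrightarrow> d (Suc m) j True (gm m j False x) = e (m - 1) j (d m j True x)"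
  using dg_opp1[of x m j True] by simp
lemma dg_opp2F: "x \<in> G m \<Longrightarrow> 1 \<le> j \<Longrightarrow> j \<le> m \<Longrightarrow> d (Suc m) (Suc j) False (gm m j True x) = e (m - 1) j (d m j False x)"
  using dg_opp2[of x m j False] by simp
lemma dg_opp2T: "x \<in> G m \<Longrightarrow> 1 \<le> j \<Longrightarrow> j \<le> m \<Longrightarrow> d (Suc m) (Suc j) True (gm m j False x) = e (m - 1) j (d m j True x)"
  using dg_opp2[of x m j True] by simp

context
  fixes x m j
  assumes x: "x \<in> G (Suc m)" and j1: "1 \<le> j" and jm: "j \<le> m"
begin

lemma aG: "d (Suc m) (Suc j) \<alpha> x \<in> G m" using dG[OF x] j1 jm by simp
lemma lG: "d (Suc m) j \<alpha> x \<in> G m" using dG[OF x] j1 jm by simp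
lemma PG: "gm m j \<beta> (d (Suc m) (Suc j) \<alpha> x) \<in> G (Suc m)" using gm_closed[OF aG j1 jm] .

lemma PGT: "gm m j True (d (Suc m) (Suc j) False x) \<in> G (Suc m)" by (rule PG)
lemma QGF: "gm m j False (d (Suc m) (Suc j) True x) \<in> G (Suc m)" by (rule PG)

lemma x_s1: "d m j True (d (Suc m) j False x) = d m j False (d (Suc m) (Suc j) True x)"
  using dd[OF x j1, of "Suc j" False True] jm by simp
lemma x_s2: "d m j True (d (Suc m) (Suc j) False x) = d m j False (d (Suc m) j True x)"
  using dd[OF x j1, of "Suc j" True False] jm by simp
lemma x_s3: "d m j False (d (Suc m) j False x) = d m j False (d (Suc m) (Suc j) False x)"
  using dd[OF x j1, of "Suc j" False False] jm by simp
lemma x_s4: "d m j True (d (Suc m) j True x) = d m j True (d (Suc m) (Suc j) True x)"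
  using dd[OF x j1, of "Suc j" True True] jm by simp

lemma Px_ok: "d (Suc m) (Suc j) True (gm m j True (d (Suc m) (Suc j) False x)) = d (Suc m) (Suc j) False x"
  using dg_same2[OF aG j1 jm] by simp

lemma PxG: "cp (Suc m) (Suc j) (gm m j True (d (Suc m) (Suc j) False x)) x \<in> G (Suc m)"
  by (rule cp_closed[OF PGT x]) (use jm Px_ok in auto)

lemma Px_2T: "d (Suc m) (Suc j) True (cp (Suc m) (Suc j) (gm m j True (d (Suc m) (Suc j) False x)) x) = d (Suc m) (Suc j) True x"
  using d_cp_plus[OF PGT x, of "Suc j"] jm Px_ok by simp

lemma Px_2F: "d (Suc m) (Suc j) False (cp (Suc m) (Suc j) (gm m j True (d (Suc m) (Suc j) False x)) x) = e (m - 1) j (d m j False (d (Suc m) (Suc j) False x))"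
  using d_cp_minus[OF PGT x, of "Suc j"] jm Px_ok dg_opp2F[OF aG j1 jm] by simp

lemma PxQ_ok: "d (Suc m) (Suc j) True (cp (Suc m) (Suc j) (gm m j True (d (Suc m) (Suc j) False x)) x) = d (Suc m) (Suc j) False (gm m j False (d (Suc m) (Suc j) True x))"
  using Px_2T dg_same2[OF aG j1 jm] by simp

lemma psiG: "psi d gm cp (Suc m) j x \<in> G (Suc m)"
  unfolding psi_def by simp (rule cp_closed[OF PxG QGF], use jm PxQ_ok in auto)

lemma Px_jF: "d (Suc m) j False (cp (Suc m) (Suc j) (gm m j True (d (Suc m) (Suc j) False x)) x) = d (Suc m) j False x"
proof -
  have "d (Suc m) j False (cp (Suc m) (Suc j) (gm m j True (d (Suc m) (Suc j) False x)) x)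
     = cp m j (d (Suc m) j False (gm m j True (d (Suc m) (Suc j) False x))) (d (Suc m) j False x)"
    using d_cp_lt[OF PGT x j1, of "Suc j" False] jm Px_ok by simp
  also have "\<dots> = cp m j (e (m - 1) j (d m j False (d (Suc m) j False x))) (d (Suc m) j False x)"
    using dg_opp1F[OF aG j1 jm] x_s3 by simp
  also have "\<dots> = d (Suc m) j False x" using cp_left_id[OF lG j1 jm] by simp
  finally show ?thesis .
qed

lemma Px_jT: "d (Suc m) j True (cp (Suc m) (Suc j) (gm m j True (d (Suc m) (Suc j) False x)) x) = cp m j (d (Suc m) (Suc j) False x) (d (Suc m) j True x)"
  using d_cp_lt[OF PGT x j1, of "Suc j" True] jm Px_ok dg_same1[OF aG j1 jm] by simp

lemma ar_G: "cp m j (d (Suc m) (Suc j) False x) (d (Suc m) j True x) \<in> G m"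
  by (rule cp_closed[OF aG lG j1 jm x_s2])
lemma lb_G: "cp m j (d (Suc m) j False x) (d (Suc m) (Suc j) True x) \<in> G m"
  by (rule cp_closed[OF lG aG j1 jm x_s1])

lemma psi_jF: "d (Suc m) j False (psi d gm cp (Suc m) j x) = cp m j (d (Suc m) j False x) (d (Suc m) (Suc j) True x)"
  unfolding psi_def using d_cp_lt[OF PxG QGF j1, of "Suc j" False] jm PxQ_ok Px_jF dg_same1[OF aG j1 jm] by simp

lemma psi_jT: "d (Suc m) j True (psi d gm cp (Suc m) j x) = cp m j (d (Suc m) (Suc j) False x) (d (Suc m) j True x)"
proof -
  have "d (Suc m) j True (psi d gm cp (Suc m) j x) = cp m j (cp m j (d (Suc m) (Suc j) False x) (d (Suc m) j True x)) (e (m - 1) j (d m j True (d (Suc m) (Suc j) True x)))"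
    unfolding psi_def using d_cp_lt[OF PxG QGF j1, of "Suc j" True] jm PxQ_ok Px_jT dg_opp1T[OF aG j1 jm] by simp
  also have "\<dots> = cp m j (d (Suc m) (Suc j) False x) (d (Suc m) j True x)"
    using cp_right_id[OF ar_G j1 jm] d_cp_plus[OF aG lG j1 jm x_s2] x_s4 by simp
  finally show ?thesis .
qed

lemma psi_j2F: "d (Suc m) (Suc j) False (psi d gm cp (Suc m) j x) = e (m - 1) j (d m j False (d (Suc m) (Suc j) False x))"
  unfolding psi_def using d_cp_minus[OF PxG QGF, of "Suc j"] jm PxQ_ok Px_2F by simp

lemma psi_j2T: "d (Suc m) (Suc j) True (psi d gm cp (Suc m) j x) = e (m - 1) j (d m j True (d (Suc m) (Suc j) True x))"
  unfolding psi_def using d_cp_plus[OF PxG QGF, of "Suc j"] jm PxQ_ok dg_opp2T[OF aG j1 jm] by simp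

lemma psi_lt: assumes "1 \<le> i" "i < j"
  shows "d (Suc m) i \<alpha> (psi d gm cp (Suc m) j x) = psi d gm cp m (j - 1) (d (Suc m) i \<alpha> x)"
proof -
  have w: "d (Suc m) i \<alpha> x \<in> G m" using dG[OF x] assms jm by simp
  have "d (Suc m) i \<alpha> (psi d gm cp (Suc m) j x) =
     cp m j (cp m j (d (Suc m) i \<alpha> (gm m j True (d (Suc m) (Suc j) False x))) (d (Suc m) i \<alpha> x))
            (d (Suc m) i \<alpha> (gm m j False (d (Suc m) (Suc j) True x)))"
    unfolding psi_def using d_cp_lt[OF PxG QGF assms(1), of "Suc j" \<alpha>] d_cp_lt[OF PGT x assms(1), of "Suc j" \<alpha>]
      jm PxQ_ok Px_ok assms by simp
  also have "\<dots> = cp m j (cp m j (gm (m - 1) (j - 1) True (d m i \<alpha> (d (Suc m) (Suc j) False x))) (d (Suc m) i \<alpha> x))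
            (gm (m - 1) (j - 1) False (d m i \<alpha> (d (Suc m) (Suc j) True x)))"
    using dg_lt[OF aG assms(1)] assms jm by simp
  also have "\<dots> = psi d gm cp m (j - 1) (d (Suc m) i \<alpha> x)"
    unfolding psi_def using dd[OF x assms(1), of "Suc j"] assms jm by simp
  finally show ?thesis .
qed

lemma psi_gt: assumes "Suc j < i" "i \<le> Suc m"
  shows "d (Suc m) i \<alpha> (psi d gm cp (Suc m) j x) = psi d gm cp m j (d (Suc m) i \<alpha> x)"
proof -
  have "d (Suc m) i \<alpha> (psi d gm cp (Suc m) j x) =
     cp m (Suc j) (cp m (Suc j) (d (Suc m) i \<alpha> (gm m j True (d (Suc m) (Suc j) False x))) (d (Suc m) i \<alpha> x))
            (d (Suc m) i \<alpha> (gm m j False (d (Suc m) (Suc j) True x)))"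
    unfolding psi_def using d_cp_gt[OF PxG QGF, of "Suc j" i \<alpha>] d_cp_gt[OF PGT x, of "Suc j" i \<alpha>]
      jm PxQ_ok Px_ok assms by simp
  also have "\<dots> = cp m (Suc j) (cp m (Suc j) (gm (m - 1) j True (d m (i - 1) \<alpha> (d (Suc m) (Suc j) False x))) (d (Suc m) i \<alpha> x))
            (gm (m - 1) j False (d m (i - 1) \<alpha> (d (Suc m) (Suc j) True x)))"
    using dg_gt[OF aG j1] assms jm by simp
  also have "\<dots> = psi d gm cp m j (d (Suc m) i \<alpha> x)"
    unfolding psi_def using dd[OF x, of "Suc j" i] assms jm by simp
  finally show ?thesis .
qed

end

lemma bd_psi: assumes x: "x \<in> G (Suc m)" and j1: "1 \<le> j" and jm: "j \<le> m"
  shows "bd d (Suc m) (psi d gm cp (Suc m) j x) = psi_sh d e gm cp (Suc m) j (bd d (Suc m) x)"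
proof (rule list_eq_sh[of _ "Suc m"])
  fix i \<alpha> assume i: "1 \<le> i" "i \<le> Suc m"
  have bj: "\<And>k \<beta>. 1 \<le> k \<Longrightarrow> k \<le> Suc m \<Longrightarrow> sh (bd d (Suc m) x) k \<beta> = d (Suc m) k \<beta> x"
    by (rule sh_bd)
  show "sh (bd d (Suc m) (psi d gm cp (Suc m) j x)) i \<alpha> = sh (psi_sh d e gm cp (Suc m) j (bd d (Suc m) x)) i \<alpha>"
    unfolding sh_bd[OF i] sh_psi_sh[OF i]
    using i j1 jm bj[of j] bj[of "Suc j"] bj[of i]
      psi_lt[OF x j1 jm, of i \<alpha>] psi_gt[OF x j1 jm, of i \<alpha>]
      psi_jF[OF x j1 jm] psi_jT[OF x j1 jm] psi_j2F[OF x j1 jm] psi_j2T[OF x j1 jm]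
    by (cases \<alpha>) (auto simp: not_less)
qed simp_all

definition unf :: "nat \<Rightarrow> nat \<Rightarrow> 'a \<Rightarrow> 'a \<Rightarrow> 'a \<Rightarrow> 'a \<Rightarrow> 'a \<Rightarrow> 'a" where
  "unf n j l r a b y = cp n j (cp n j (cp n (Suc j) (e (n - 1) j l) (gm (n - 1) j True b)) y)
                              (cp n (Suc j) (gm (n - 1) j False a) (e (n - 1) j r))"

context
  fixes l r a b y m j
  assumes ul: "l \<in> G m" and ur: "r \<in> G m" and ua: "a \<in> G m" and ub: "b \<in> G m"
    and uy: "y \<in> G (Suc m)" and uj1: "1 \<le> j" and ujm: "j \<le> m"
    and s1: "d m j True l = d m j False b"
    and s2: "d m j True a = d m j False r"
    and s3: "d m j False l = d m j False a"
    and s4: "d m j True r = d m j True b"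
    and y1: "d (Suc m) j False y = cp m j l b"
    and y2: "d (Suc m) j True y = cp m j a r"
    and y3: "d (Suc m) (Suc j) False y = e (m - 1) j (d m j False a)"
    and y4: "d (Suc m) (Suc j) True y = e (m - 1) j (d m j True b)"
begin

lemma um1: "Suc (m - 1) = m" using uj1 ujm by simp
lemma uel: "e m j l \<in> G (Suc m)" using e_closed[OF ul uj1] ujm by simp
lemma uer: "e m j r \<in> G (Suc m)" using e_closed[OF ur uj1] ujm by simp
lemma ugb: "gm m j True b \<in> G (Suc m)" using gm_closed[OF ub uj1 ujm] .
lemma uga: "gm m j False a \<in> G (Suc m)" using gm_closed[OF ua uj1 ujm] .
lemma ugbF: "gm m j False b \<in> G (Suc m)" using gm_closed[OF ub uj1 ujm] .
lemma ugaT: "gm m j True a \<in> G (Suc m)" using gm_closed[OF ua uj1 ujm] .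

lemma L_ok: "d (Suc m) (Suc j) True (e m j l) = d (Suc m) (Suc j) False (gm m j True b)"
  using de_gt[OF ul uj1, of "Suc j" True] dg_opp2F[OF ub uj1 ujm] s1 ujm by simp
lemma LG: "cp (Suc m) (Suc j) (e m j l) (gm m j True b) \<in> G (Suc m)"
  by (rule cp_closed[OF uel ugb]) (use ujm L_ok in auto)
lemma L_jF: "d (Suc m) j False (cp (Suc m) (Suc j) (e m j l) (gm m j True b)) = l"
  using d_cp_lt[OF uel ugb uj1, of "Suc j" False] ujm L_ok de_eq[OF ul uj1] dg_opp1F[OF ub uj1 ujm]
    cp_right_id[OF ul uj1 ujm] s1 by simp
lemma L_jT: "d (Suc m) j True (cp (Suc m) (Suc j) (e m j l) (gm m j True b)) = cp m j l b"
  using d_cp_lt[OF uel ugb uj1, of "Suc j" True] ujm L_ok de_eq[OF ul uj1] dg_same1[OF ub uj1 ujm] by simp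
lemma L_2F: "d (Suc m) (Suc j) False (cp (Suc m) (Suc j) (e m j l) (gm m j True b)) = e (m - 1) j (d m j False l)"
  using d_cp_minus[OF uel ugb, of "Suc j"] ujm L_ok de_gt[OF ul uj1, of "Suc j" False] by simp
lemma L_2T: "d (Suc m) (Suc j) True (cp (Suc m) (Suc j) (e m j l) (gm m j True b)) = b"
  using d_cp_plus[OF uel ugb, of "Suc j"] ujm L_ok dg_same2[OF ub uj1 ujm] by simp

lemma R_ok: "d (Suc m) (Suc j) True (gm m j False a) = d (Suc m) (Suc j) False (e m j r)"
  using de_gt[OF ur uj1, of "Suc j" False] dg_opp2T[OF ua uj1 ujm] s2 ujm by simp
lemma RG: "cp (Suc m) (Suc j) (gm m j False a) (e m j r) \<in> G (Suc m)"
  by (rule cp_closed[OF uga uer]) (use ujm R_ok in auto)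
lemma R_jF: "d (Suc m) j False (cp (Suc m) (Suc j) (gm m j False a) (e m j r)) = cp m j a r"
  using d_cp_lt[OF uga uer uj1, of "Suc j" False] ujm R_ok de_eq[OF ur uj1] dg_same1[OF ua uj1 ujm] by simp
lemma R_jT: "d (Suc m) j True (cp (Suc m) (Suc j) (gm m j False a) (e m j r)) = r"
  using d_cp_lt[OF uga uer uj1, of "Suc j" True] ujm R_ok de_eq[OF ur uj1] dg_opp1T[OF ua uj1 ujm]
    cp_left_id[OF ur uj1 ujm] s2 by simp
lemma R_2F: "d (Suc m) (Suc j) False (cp (Suc m) (Suc j) (gm m j False a) (e m j r)) = a"
  using d_cp_minus[OF uga uer, of "Suc j"] ujm R_ok dg_same2[OF ua uj1 ujm] by simp
lemma R_2T: "d (Suc m) (Suc j) True (cp (Suc m) (Suc j) (gm m j False a) (e m j r)) = e (m - 1) j (d m j True r)"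
  using d_cp_plus[OF uga uer, of "Suc j"] ujm R_ok de_gt[OF ur uj1, of "Suc j" True] by simp

lemma M_ok: "d (Suc m) j True (cp (Suc m) (Suc j) (e m j l) (gm m j True b)) = d (Suc m) j False y"
  using L_jT y1 by simp
lemma MG: "cp (Suc m) j (cp (Suc m) (Suc j) (e m j l) (gm m j True b)) y \<in> G (Suc m)"
  by (rule cp_closed[OF LG uy uj1]) (use ujm M_ok in auto)
lemma M_jF: "d (Suc m) j False (cp (Suc m) j (cp (Suc m) (Suc j) (e m j l) (gm m j True b)) y) = l"
  using d_cp_minus[OF LG uy uj1] ujm M_ok L_jF by simp
lemma M_jT: "d (Suc m) j True (cp (Suc m) j (cp (Suc m) (Suc j) (e m j l) (gm m j True b)) y) = cp m j a r"
  using d_cp_plus[OF LG uy uj1] ujm M_ok y2 by simp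

lemma cG: "d m j \<alpha> a \<in> G (m - 1)" using d_closed[OF ua uj1 ujm] .
lemma cbG: "d m j \<alpha> b \<in> G (m - 1)" using d_closed[OF ub uj1 ujm] .
lemma EG: "c \<in> G (m - 1) \<Longrightarrow> e (m - 1) j c \<in> G m" using e_closed[of c "m - 1" j] uj1 ujm um1 by simp
lemma dE: "c \<in> G (m - 1) \<Longrightarrow> d m j \<alpha> (e (m - 1) j c) = c" using de_eq[of c "m - 1" j] uj1 ujm um1 by simp
lemma EE: "c \<in> G (m - 1) \<Longrightarrow> cp m j (e (m - 1) j c) (e (m - 1) j c) = e (m - 1) j c"
  using cp_left_id[OF EG uj1 ujm, of c] dE[of c False] by simp

lemma M_2F: "d (Suc m) (Suc j) False (cp (Suc m) j (cp (Suc m) (Suc j) (e m j l) (gm m j True b)) y) = e (m - 1) j (d m j False a)"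
  using d_cp_gt[OF LG uy uj1, of "Suc j" False] ujm M_ok L_2F y3 s3 EE[OF cG] by simp
lemma M_2T: "d (Suc m) (Suc j) True (cp (Suc m) j (cp (Suc m) (Suc j) (e m j l) (gm m j True b)) y) = b"
  using d_cp_gt[OF LG uy uj1, of "Suc j" True] ujm M_ok L_2T y4 cp_right_id[OF ub uj1 ujm] by simp

lemma u_ok: "d (Suc m) j True (cp (Suc m) j (cp (Suc m) (Suc j) (e m j l) (gm m j True b)) y) =
   d (Suc m) j False (cp (Suc m) (Suc j) (gm m j False a) (e m j r))"
  using M_jT R_jF by simp

lemma unf_eq: "unf (Suc m) j l r a b y = cp (Suc m) j (cp (Suc m) j (cp (Suc m) (Suc j) (e m j l) (gm m j True b)) y)
     (cp (Suc m) (Suc j) (gm m j False a) (e m j r))" by (simp add: unf_def)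

lemma unfG: "unf (Suc m) j l r a b y \<in> G (Suc m)"
  unfolding unf_eq by (rule cp_closed[OF MG RG uj1]) (use ujm u_ok in auto)
lemma unf_jF: "d (Suc m) j False (unf (Suc m) j l r a b y) = l"
  unfolding unf_eq using d_cp_minus[OF MG RG uj1] ujm u_ok M_jF by simp
lemma unf_jT: "d (Suc m) j True (unf (Suc m) j l r a b y) = r"
  unfolding unf_eq using d_cp_plus[OF MG RG uj1] ujm u_ok R_jT by simp
lemma unf_2F: "d (Suc m) (Suc j) False (unf (Suc m) j l r a b y) = a"
  unfolding unf_eq using d_cp_gt[OF MG RG uj1, of "Suc j" False] ujm u_ok M_2F R_2F cp_left_id[OF ua uj1 ujm] by simp
lemma unf_2T: "d (Suc m) (Suc j) True (unf (Suc m) j l r a b y) = b"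
  unfolding unf_eq using d_cp_gt[OF MG RG uj1, of "Suc j" True] ujm u_ok M_2T R_2T cp_right_id[OF ub uj1 ujm] s4 by simp

lemma stepA: "cp (Suc m) (Suc j) (gm m j True a) (unf (Suc m) j l r a b y) = cp (Suc m) j (cp (Suc m) (Suc j) (e m j l) (gm m j True b)) y"
proof -
  let ?c = "d m j False a"
  let ?I = "e m j (e (m - 1) j ?c)"
  let ?P = "gm m j True a"
  let ?M = "cp (Suc m) j (cp (Suc m) (Suc j) (e m j l) (gm m j True b)) y"
  let ?R = "cp (Suc m) (Suc j) (gm m j False a) (e m j r)"
  have IG: "?I \<in> G (Suc m)" using e_closed[OF EG[OF cG] uj1] ujm by simp
  have P1: "cp (Suc m) j ?I ?P = ?P"
    using cp_left_id[OF ugaT uj1, of] ujm dg_opp1F[OF ua uj1 ujm] by simp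
  have c1: "d (Suc m) j True ?I = d (Suc m) j False ?P"
    using de_eq[OF EG[OF cG], of j True] dg_opp1F[OF ua uj1 ujm] uj1 ujm by simp
  have c3: "d (Suc m) (Suc j) True ?I = d (Suc m) (Suc j) False ?M"
    using de_gt[OF EG[OF cG] uj1, of "Suc j" True] dE[OF cG] M_2F ujm by simp
  have c4: "d (Suc m) (Suc j) True ?P = d (Suc m) (Suc j) False ?R"
    using dg_same2[OF ua uj1 ujm] R_2F by simp
  have "cp (Suc m) (Suc j) ?P (unf (Suc m) j l r a b y) = cp (Suc m) (Suc j) (cp (Suc m) j ?I ?P) (cp (Suc m) j ?M ?R)"
    unfolding unf_eq P1 ..
  also have "\<dots> = cp (Suc m) j (cp (Suc m) (Suc j) ?I ?M) (cp (Suc m) (Suc j) ?P ?R)"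
    by (rule interchange[OF IG ugaT MG RG uj1 _ _ _ _ c1 u_ok c3 c4]) (use ujm in auto)
  also have "cp (Suc m) (Suc j) ?I ?M = ?M"
  proof -
    have "?I = e m (Suc j) (e (m - 1) j ?c)" using ee[OF cG uj1, of j] ujm um1 by simp
    then show ?thesis using cp_left_id[OF MG, of "Suc j"] ujm M_2F by simp
  qed
  also have "cp (Suc m) (Suc j) ?P ?R = e m j (cp m j a r)"
  proof -
    have "cp (Suc m) (Suc j) ?P ?R = cp (Suc m) (Suc j) (cp (Suc m) (Suc j) ?P (gm m j False a)) (e m j r)"
      by (rule cp_assoc[OF ugaT uga uer, symmetric]) (use ujm R_ok dg_same2[OF ua uj1 ujm] in auto)
    also have "\<dots> = cp (Suc m) (Suc j) (e m j a) (e m j r)" using conn_inv2[OF ua uj1 ujm] by simp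
    also have "\<dots> = e m j (cp m j a r)" using e_cp_le[OF ua ur uj1 _ ujm s2] by simp
    finally show ?thesis .
  qed
  also have "cp (Suc m) j ?M (e m j (cp m j a r)) = ?M"
    using cp_right_id[OF MG uj1] ujm M_jT by simp
  finally show ?thesis .
qed

lemma psi_unf: "psi d gm cp (Suc m) j (unf (Suc m) j l r a b y) = y"
proof -
  let ?c = "d m j True b"
  let ?I = "e m j (e (m - 1) j ?c)"
  let ?Q = "gm m j False b"
  let ?L = "cp (Suc m) (Suc j) (e m j l) (gm m j True b)"
  have IG: "?I \<in> G (Suc m)" using e_closed[OF EG[OF cbG] uj1] ujm by simp
  have Q1: "cp (Suc m) j ?Q ?I = ?Q"
    using cp_right_id[OF ugbF uj1] ujm dg_opp1T[OF ub uj1 ujm] by simp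
  have c2: "d (Suc m) j True ?Q = d (Suc m) j False ?I"
    using de_eq[OF EG[OF cbG], of j False] dg_opp1T[OF ub uj1 ujm] uj1 ujm by simp
  have c3: "d (Suc m) (Suc j) True ?L = d (Suc m) (Suc j) False ?Q"
    using dg_same2[OF ub uj1 ujm] L_2T by simp
  have c4: "d (Suc m) (Suc j) True y = d (Suc m) (Suc j) False ?I"
    using de_gt[OF EG[OF cbG] uj1, of "Suc j" False] dE[OF cbG] y4 ujm by simp
  have "psi d gm cp (Suc m) j (unf (Suc m) j l r a b y) = cp (Suc m) (Suc j) (cp (Suc m) j ?L y) ?Q"
    unfolding psi_def using unf_2F unf_2T stepA by simp
  also have "\<dots> = cp (Suc m) (Suc j) (cp (Suc m) j ?L y) (cp (Suc m) j ?Q ?I)" unfolding Q1 ..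
  also have "\<dots> = cp (Suc m) j (cp (Suc m) (Suc j) ?L ?Q) (cp (Suc m) (Suc j) y ?I)"
    by (rule interchange[OF LG uy ugbF IG uj1 _ _ _ _ M_ok c2 c3 c4]) (use ujm in auto)
  also have "cp (Suc m) (Suc j) y ?I = y"
  proof -
    have "?I = e m (Suc j) (e (m - 1) j ?c)" using ee[OF cbG uj1, of j] ujm um1 by simp
    then show ?thesis using cp_right_id[OF uy, of "Suc j"] ujm y4 by simp
  qed
  also have "cp (Suc m) (Suc j) ?L ?Q = e m j (cp m j l b)"
  proof -
    have "cp (Suc m) (Suc j) ?L ?Q = cp (Suc m) (Suc j) (e m j l) (cp (Suc m) (Suc j) (gm m j True b) ?Q)"
      by (rule cp_assoc[OF uel ugb ugbF]) (use ujm L_ok dg_same2[OF ub uj1 ujm] in auto)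
    also have "\<dots> = cp (Suc m) (Suc j) (e m j l) (e m j b)" using conn_inv2[OF ub uj1 ujm] by simp
    also have "\<dots> = e m j (cp m j l b)" using e_cp_le[OF ul ub uj1 _ ujm s1] by simp
    finally show ?thesis .
  qed
  also have "cp (Suc m) j (e m j (cp m j l b)) y = y"
    using cp_left_id[OF uy uj1] ujm y1 by simp
  finally show ?thesis .
qed

lemma unf_lt: assumes i1: "1 \<le> i" and ij: "i < j"
  shows "d (Suc m) i \<alpha> (unf (Suc m) j l r a b y) =
    unf m (j - 1) (d m i \<alpha> l) (d m i \<alpha> r) (d m i \<alpha> a) (d m i \<alpha> b) (d (Suc m) i \<alpha> y)"
proof -
  have j: "Suc (j - 1) = j" using ij by simp
  show ?thesis
    unfolding unf_eq unf_def
    using d_cp_lt[OF MG RG i1 ij, of \<alpha>] d_cp_lt[OF LG uy i1 ij, of \<alpha>]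
      d_cp_lt[OF uel ugb i1, of "Suc j" \<alpha>] d_cp_lt[OF uga uer i1, of "Suc j" \<alpha>]
      de_lt[OF ul i1 ij, of \<alpha>] de_lt[OF ur i1 ij, of \<alpha>]
      dg_lt[OF ub i1 ij ujm, of \<alpha> True] dg_lt[OF ua i1 ij ujm, of \<alpha> False]
      ujm ij u_ok M_ok L_ok R_ok j by simp
qed

lemma unf_gt: assumes ij: "Suc j < i" and im: "i \<le> Suc m"
  shows "d (Suc m) i \<alpha> (unf (Suc m) j l r a b y) =
    unf m j (d m (i - 1) \<alpha> l) (d m (i - 1) \<alpha> r) (d m (i - 1) \<alpha> a) (d m (i - 1) \<alpha> b) (d (Suc m) i \<alpha> y)"
proof -
  have ij': "j < i" using ij by simp
  show ?thesis
    unfolding unf_eq unf_def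
    using d_cp_gt[OF MG RG uj1 ij' im, of \<alpha>] d_cp_gt[OF LG uy uj1 ij' im, of \<alpha>]
      d_cp_gt[OF uel ugb _ ij im, of \<alpha>] d_cp_gt[OF uga uer _ ij im, of \<alpha>]
      de_gt[OF ul uj1 ij' im, of \<alpha>] de_gt[OF ur uj1 ij' im, of \<alpha>]
      dg_gt[OF ub uj1 ij im, of \<alpha> True] dg_gt[OF ua uj1 ij im, of \<alpha> False]
      ujm u_ok M_ok L_ok R_ok by simp
qed

end

lemma unf_psi: assumes x: "x \<in> G (Suc m)" and j1: "1 \<le> j" and jm: "j \<le> m"
  shows "unf (Suc m) j (d (Suc m) j False x) (d (Suc m) j True x) (d (Suc m) (Suc j) False x) (d (Suc m) (Suc j) True x)
           (psi d gm cp (Suc m) j x) = x"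
proof -
  let ?l = "d (Suc m) j False x" and ?r = "d (Suc m) j True x"
  let ?a = "d (Suc m) (Suc j) False x" and ?b = "d (Suc m) (Suc j) True x"
  let ?A = "e m j ?l" and ?B = "gm m j True ?b" and ?P = "gm m j True ?a" and ?Q = "gm m j False ?b"
  let ?C = "cp (Suc m) (Suc j) ?P x"
  let ?Ga = "gm m j False ?a" and ?er = "e m j ?r"
  have lG: "?l \<in> G m" "?r \<in> G m" using lG[OF x j1 jm] by auto
  have aG: "?a \<in> G m" "?b \<in> G m" using aG[OF x j1 jm] by auto
  have AG: "?A \<in> G (Suc m)" "?er \<in> G (Suc m)" using e_closed[OF lG(1) j1] e_closed[OF lG(2) j1] jm by auto
  have BG: "?B \<in> G (Suc m)" "?P \<in> G (Suc m)" "?Q \<in> G (Suc m)" "?Ga \<in> G (Suc m)"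
    using PG[OF x j1 jm] by auto
  have CG: "?C \<in> G (Suc m)" by (rule PxG[OF x j1 jm])
  have "cp (Suc m) j (cp (Suc m) (Suc j) ?A ?B) (cp (Suc m) (Suc j) ?C ?Q) = cp (Suc m) (Suc j) (cp (Suc m) j ?A ?C) (cp (Suc m) j ?B ?Q)"
  proof (rule interchange[OF AG(1) BG(1) CG BG(3)])
    show "d (Suc m) (Suc j) True ?A = d (Suc m) (Suc j) False ?B"
      using de_gt[OF lG(1) j1, of "Suc j" True] dg_opp2F[OF aG(2) j1 jm] x_s1[OF x j1 jm] jm by simp
    show "d (Suc m) (Suc j) True ?C = d (Suc m) (Suc j) False ?Q" by (rule PxQ_ok[OF x j1 jm])
    show "d (Suc m) j True ?A = d (Suc m) j False ?C" using de_eq[OF lG(1) j1] Px_jF[OF x j1 jm] jm by simp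
    show "d (Suc m) j True ?B = d (Suc m) j False ?Q" using dg_same1[OF aG(2) j1 jm] by simp
  qed (use j1 jm in auto)
  also have "cp (Suc m) j ?A ?C = ?C" using cp_left_id[OF CG j1] Px_jF[OF x j1 jm] jm by simp
  also have "cp (Suc m) j ?B ?Q = e m (Suc j) ?b" using conn_inv1[OF aG(2) j1 jm] .
  also have "cp (Suc m) (Suc j) ?C (e m (Suc j) ?b) = ?C" using cp_right_id[OF CG, of "Suc j"] Px_2T[OF x j1 jm] jm by simp
  finally have st1: "cp (Suc m) j (cp (Suc m) (Suc j) ?A ?B) (cp (Suc m) (Suc j) ?C ?Q) = ?C" .
  have "cp (Suc m) j ?C (cp (Suc m) (Suc j) ?Ga ?er) = cp (Suc m) (Suc j) (cp (Suc m) j ?P ?Ga) (cp (Suc m) j x ?er)"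
  proof (rule interchange[OF BG(2) x BG(4) AG(2)])
    show "d (Suc m) (Suc j) True ?P = d (Suc m) (Suc j) False x" by (rule Px_ok[OF x j1 jm])
    show "d (Suc m) (Suc j) True ?Ga = d (Suc m) (Suc j) False ?er"
      using de_gt[OF lG(2) j1, of "Suc j" False] dg_opp2T[OF aG(1) j1 jm] x_s2[OF x j1 jm] jm by simp
    show "d (Suc m) j True ?P = d (Suc m) j False ?Ga" using dg_same1[OF aG(1) j1 jm] by simp
    show "d (Suc m) j True x = d (Suc m) j False ?er" using de_eq[OF lG(2) j1] jm by simp
  qed (use j1 jm in auto)
  also have "cp (Suc m) j ?P ?Ga = e m (Suc j) ?a" using conn_inv1[OF aG(1) j1 jm] .
  also have "cp (Suc m) j x ?er = x" using cp_right_id[OF x j1] jm by simp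
  also have "cp (Suc m) (Suc j) (e m (Suc j) ?a) x = x" using cp_left_id[OF x, of "Suc j"] jm by simp
  finally have st2: "cp (Suc m) j ?C (cp (Suc m) (Suc j) ?Ga ?er) = x" .
  show ?thesis unfolding unf_def psi_def using st1 st2 by simp
qed

lemma shellsD:
  assumes "z \<in> shells G d n"
  shows "length z = n" "\<And>i \<alpha>. 1 \<le> i \<Longrightarrow> i \<le> n \<Longrightarrow> sh z i \<alpha> \<in> G (n - 1)"
    "\<And>i k \<alpha> \<beta>. 1 \<le> i \<Longrightarrow> i < k \<Longrightarrow> k \<le> n \<Longrightarrow> d (n - 1) i \<alpha> (sh z k \<beta>) = d (n - 1) (k - 1) \<beta> (sh z i \<alpha>)"
  using assms unfolding shells_def by auto

lemma unfold_exists: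
  assumes z: "z \<in> shells G d (Suc m)" and y: "y \<in> G (Suc m)" and j1: "1 \<le> j" and jm: "j \<le> m"
    and zy: "psi_sh d e gm cp (Suc m) j z = bd d (Suc m) y"
  shows "\<exists>x\<in>G (Suc m). bd d (Suc m) x = z \<and> psi d gm cp (Suc m) j x = y"
proof -
  have zl: "length z = Suc m" using shellsD(1)[OF z] .
  have zG: "\<And>i \<alpha>. 1 \<le> i \<Longrightarrow> i \<le> Suc m \<Longrightarrow> sh z i \<alpha> \<in> G m" using shellsD(2)[OF z] by simp
  have zc: "\<And>i k \<alpha> \<beta>. 1 \<le> i \<Longrightarrow> i < k \<Longrightarrow> k \<le> Suc m \<Longrightarrow> d m i \<alpha> (sh z k \<beta>) = d m (k - 1) \<beta> (sh z i \<alpha>)"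
    using shellsD(3)[OF z] by simp
  have yf: "\<And>i \<alpha>. 1 \<le> i \<Longrightarrow> i \<le> Suc m \<Longrightarrow> d (Suc m) i \<alpha> y = sh (psi_sh d e gm cp (Suc m) j z) i \<alpha>"
    using sh_bd[of _ "Suc m" d y] zy by simp
  let ?l = "sh z j False" and ?r = "sh z j True" and ?a = "sh z (Suc j) False" and ?b = "sh z (Suc j) True"
  have ul: "?l \<in> G m" and ur: "?r \<in> G m" and ua: "?a \<in> G m" and ub: "?b \<in> G m"
    using zG j1 jm by auto
  have s1: "d m j True ?l = d m j False ?b" using zc[of j "Suc j" False True] j1 jm by simp
  have s2: "d m j True ?a = d m j False ?r" using zc[of j "Suc j" True False] j1 jm by simp
  have s3: "d m j False ?l = d m j False ?a" using zc[of j "Suc j" False False] j1 jm by simp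
  have s4: "d m j True ?r = d m j True ?b" using zc[of j "Suc j" True True] j1 jm by simp
  have jj: "1 \<le> j" "j \<le> Suc m" "1 \<le> Suc j" "Suc j \<le> Suc m" using j1 jm by auto
  have y1: "d (Suc m) j False y = cp m j ?l ?b" using yf[of j False] sh_psi_sh[OF jj(1,2), of d e gm cp j z] j1 jm by simp
  have y2: "d (Suc m) j True y = cp m j ?a ?r" using yf[of j True] sh_psi_sh[OF jj(1,2), of d e gm cp j z] j1 jm by simp
  have y3: "d (Suc m) (Suc j) False y = e (m - 1) j (d m j False ?a)" using yf[of "Suc j" False] sh_psi_sh[OF jj(3,4), of d e gm cp j z] j1 jm by simp
  have y4: "d (Suc m) (Suc j) True y = e (m - 1) j (d m j True ?b)" using yf[of "Suc j" True] sh_psi_sh[OF jj(3,4), of d e gm cp j z] j1 jm by simp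
  note U = ul ur ua ub y j1 jm s1 s2 s3 s4 y1 y2 y3 y4
  let ?u = "unf (Suc m) j ?l ?r ?a ?b y"
  have "bd d (Suc m) ?u = z"
  proof (rule list_eq_sh[of _ "Suc m"])
    fix i \<alpha> assume i: "1 \<le> i" "i \<le> Suc m"
    have "d (Suc m) i \<alpha> ?u = sh z i \<alpha>"
    proof -
      consider "i < j" | "i = j" | "i = Suc j" | "Suc j < i" by linarith
      then show ?thesis
      proof cases
        case 1
        let ?w = "sh z i \<alpha>"
        have wG: "?w \<in> G (Suc (m - 1))" using zG[OF i] 1 jm by simp
        have "d (Suc m) i \<alpha> ?u = unf m (j - 1) (d m (j - 1) False ?w) (d m (j - 1) True ?w) (d m j False ?w) (d m j True ?w) (psi d gm cp m (j - 1) ?w)"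
          using unf_lt[OF U i(1) 1, of \<alpha>] zc[of i j \<alpha>] zc[of i "Suc j" \<alpha>] yf[OF i, of \<alpha>] sh_psi_sh[OF i, of d e gm cp j z] i 1 jm by simp
        also have "\<dots> = ?w" using unf_psi[OF wG, of "j - 1"] 1 i jm by simp
        finally show ?thesis .
      next
        case 2 then show ?thesis using unf_jF[OF U] unf_jT[OF U] by (cases \<alpha>) auto
      next
        case 3 then show ?thesis using unf_2F[OF U] unf_2T[OF U] by (cases \<alpha>) auto
      next
        case 4
        let ?w = "sh z i \<alpha>"
        have wG: "?w \<in> G (Suc (m - 1))" using zG[OF i] 4 i jm by simp
        have "d (Suc m) i \<alpha> ?u = unf m j (d m j False ?w) (d m j True ?w) (d m (Suc j) False ?w) (d m (Suc j) True ?w) (psi d gm cp m j ?w)"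
          using unf_gt[OF U 4 i(2), of \<alpha>] zc[of j i _ \<alpha>] zc[of "Suc j" i _ \<alpha>] yf[OF i, of \<alpha>] sh_psi_sh[OF i, of d e gm cp j z] i 4 j1 jm by simp
        also have "\<dots> = ?w" using unf_psi[OF wG, of j] 4 i j1 by simp
        finally show ?thesis .
      qed
    qed
    then show "sh (bd d (Suc m) ?u) i \<alpha> = sh z i \<alpha>" using sh_bd[OF i, of d] by simp
  qed (use zl in simp_all)
  moreover have "psi d gm cp (Suc m) j ?u = y" by (rule psi_unf[OF U])
  moreover have "?u \<in> G (Suc m)" by (rule unfG[OF U])
  ultimately show ?thesis by blast
qed

lemma psi_inj:
  assumes x: "x \<in> G (Suc m)" and x': "x' \<in> G (Suc m)" and j1: "1 \<le> j" and jm: "j \<le> m"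
    and b: "bd d (Suc m) x = bd d (Suc m) x'" and p: "psi d gm cp (Suc m) j x = psi d gm cp (Suc m) j x'"
  shows "x = x'"
proof -
  have f: "d (Suc m) i \<alpha> x = d (Suc m) i \<alpha> x'" if "1 \<le> i" "i \<le> Suc m" for i \<alpha>
    using sh_bd[OF that, of d x \<alpha>] sh_bd[OF that, of d x' \<alpha>] b by simp
  have jj: "1 \<le> j" "j \<le> Suc m" "1 \<le> Suc j" "Suc j \<le> Suc m" using j1 jm by auto
  have "x = unf (Suc m) j (d (Suc m) j False x) (d (Suc m) j True x) (d (Suc m) (Suc j) False x) (d (Suc m) (Suc j) True x)
           (psi d gm cp (Suc m) j x)" using unf_psi[OF x j1 jm] by simp
  also have "\<dots> = unf (Suc m) j (d (Suc m) j False x') (d (Suc m) j True x') (d (Suc m) (Suc j) False x') (d (Suc m) (Suc j) True x')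
           (psi d gm cp (Suc m) j x')" unfolding p f[OF jj(1,2)] f[OF jj(3,4)] ..
  also have "\<dots> = x'" using unf_psi[OF x' j1 jm] by simp
  finally show ?thesis .
qed

lemma bd_shell: assumes x: "x \<in> G n" and n: "1 \<le> n" shows "bd d n x \<in> shells G d n"
  unfolding shells_def
proof (intro CollectI conjI allI impI)
  show "length (bd d n x) = n" by simp
  fix i \<alpha> assume i: "1 \<le> i \<and> i \<le> n"
  then show "sh (bd d n x) i \<alpha> \<in> G (n - 1)" using sh_bd[of i n d x \<alpha>] d_closed[OF x] by simp
next
  fix i j \<alpha> \<beta> assume i: "1 \<le> i \<and> i < j \<and> j \<le> n"
  then show "d (n - 1) i \<alpha> (sh (bd d n x) j \<beta>) = d (n - 1) (j - 1) \<beta> (sh (bd d n x) i \<alpha>)"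
    using sh_bd[of i n d x \<alpha>] sh_bd[of j n d x \<beta>] dd[OF x] by simp
qed

lemma psi_sh_shell:
  assumes z: "z \<in> shells G d (Suc (Suc p))" and j1: "1 \<le> j" and jm: "j \<le> Suc p"
  shows "psi_sh d e gm cp (Suc (Suc p)) j z \<in> shells G d (Suc (Suc p))"
proof -
  let ?Z = "sh z"
  let ?W = "sh (psi_sh d e gm cp (Suc (Suc p)) j z)"
  have ZG: "\<And>i \<alpha>. 1 \<le> i \<Longrightarrow> i \<le> Suc (Suc p) \<Longrightarrow> ?Z i \<alpha> \<in> G (Suc p)" using shellsD(2)[OF z] by simp
  have zc: "\<And>i k \<alpha> \<beta>. 1 \<le> i \<Longrightarrow> i < k \<Longrightarrow> k \<le> Suc (Suc p) \<Longrightarrow> d (Suc p) i \<alpha> (?Z k \<beta>) = d (Suc p) (k - 1) \<beta> (?Z i \<alpha>)"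
    using shellsD(3)[OF z] by simp
  have Wlt: "?W i \<alpha> = psi d gm cp (Suc p) (j - 1) (?Z i \<alpha>)" if "1 \<le> i" "i < j" for i \<alpha>
    using sh_psi_sh[of i "Suc (Suc p)" d e gm cp j z \<alpha>] that jm by simp
  have WjF: "?W j False = cp (Suc p) j (?Z j False) (?Z (Suc j) True)"
    using sh_psi_sh[of j "Suc (Suc p)" d e gm cp j z False] j1 jm by simp
  have WjT: "?W j True = cp (Suc p) j (?Z (Suc j) False) (?Z j True)"
    using sh_psi_sh[of j "Suc (Suc p)" d e gm cp j z True] j1 jm by simp
  have Wj1: "?W (Suc j) \<alpha> = e p j (d (Suc p) j \<alpha> (?Z (Suc j) \<alpha>))" for \<alpha>
    using sh_psi_sh[of "Suc j" "Suc (Suc p)" d e gm cp j z \<alpha>] j1 jm by simp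
  have Wgt: "?W i \<alpha> = psi d gm cp (Suc p) j (?Z i \<alpha>)" if "Suc j < i" "i \<le> Suc (Suc p)" for i \<alpha>
    using sh_psi_sh[of i "Suc (Suc p)" d e gm cp j z \<alpha>] that by simp
  have Zj: "?Z j \<alpha> \<in> G (Suc p)" "?Z (Suc j) \<alpha> \<in> G (Suc p)" for \<alpha> using ZG j1 jm by auto
  have t1: "d (Suc p) j True (?Z j False) = d (Suc p) j False (?Z (Suc j) True)" using zc[of j "Suc j" False True] j1 jm by simp
  have t2: "d (Suc p) j True (?Z (Suc j) False) = d (Suc p) j False (?Z j True)" using zc[of j "Suc j" True False] j1 jm by simp
  have WG: "?W i \<alpha> \<in> G (Suc p)" if i: "1 \<le> i" "i \<le> Suc (Suc p)" for i \<alpha>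
  proof -
    consider "i < j" | "i = j" | "i = Suc j" | "Suc j < i" by linarith
    then show ?thesis
    proof cases
      case 1 then show ?thesis using Wlt[OF i(1) 1] psiG[OF ZG[OF i], of "j - 1"] i jm by simp
    next
      case 2 then show ?thesis using WjF WjT cp_closed[OF Zj(1) Zj(2) j1 jm t1] cp_closed[OF Zj(2) Zj(1) j1 jm t2]
        by (cases \<alpha>) auto
    next
      case 3 then show ?thesis using Wj1 e_closed[OF d_closed[OF Zj(2) j1 jm] j1] jm by simp
    next
      case 4 then show ?thesis using Wgt[OF 4 i(2)] psiG[OF ZG[OF i], of j] j1 i by simp
    qed
  qed
  have WC: "d (Suc p) i \<alpha> (?W k \<beta>) = d (Suc p) (k - 1) \<beta> (?W i \<alpha>)"
    if ik: "1 \<le> i" "i < k" "k \<le> Suc (Suc p)" for i k \<alpha> \<beta>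
  proof -
    have Zi: "?Z i \<alpha> \<in> G (Suc p)" and Zk: "?Z k \<beta> \<in> G (Suc p)" using ZG ik by auto
    consider "k < j" | "k = j" | "i < j" "k = Suc j" | "i < j" "Suc j < k" | "i = j" "k = Suc j"
      | "i = j" "Suc j < k" | "i = Suc j" "Suc j < k" | "Suc j < i" using ik by linarith
    then show ?thesis
    proof cases
      case 1
      then show ?thesis using Wlt[of i \<alpha>] Wlt[of k \<beta>] ik
          psi_lt[OF Zk _ _, of "j - 1" i \<alpha>] psi_lt[OF Zi _ _, of "j - 1" "k - 1" \<beta>] zc[OF ik] jm by simp
    next
      case 2
      have ij: "i < j" using 2 ik by simp
      have a: "d (Suc p) i \<alpha> (?Z j \<gamma>) = d (Suc p) (j - 1) \<gamma> (?Z i \<alpha>)" for \<gamma> using zc[of i j] ik ij jm by simp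
      have b: "d (Suc p) i \<alpha> (?Z (Suc j) \<gamma>) = d (Suc p) j \<gamma> (?Z i \<alpha>)" for \<gamma> using zc[of i "Suc j"] ik ij jm by simp
      have jj: "Suc (j - 1) = j" using ij by simp
      show ?thesis
      proof (cases \<beta>)
        case True
        then show ?thesis using 2 WjT Wlt[OF ik(1) ij] d_cp_lt[OF Zj(2) Zj(1) ik(1) ij jm t2, of \<alpha>] a b
            psi_jT[OF Zi, of "j - 1"] ik ij jm jj by simp
      next
        case False
        then show ?thesis using 2 WjF Wlt[OF ik(1) ij] d_cp_lt[OF Zj(1) Zj(2) ik(1) ij jm t1, of \<alpha>] a b
            psi_jF[OF Zi, of "j - 1"] ik ij jm jj by simp
      qed
    next
      case 3
      have jj: "Suc (j - 1) = j" using 3 by simp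
      have "d (Suc p) i \<alpha> (?W k \<beta>) = e (p - 1) (j - 1) (d p i \<alpha> (d (Suc p) j \<beta> (?Z (Suc j) \<beta>)))"
        using 3 Wj1 de_lt[OF d_closed[OF Zj(2) j1 jm] ik(1), of j] jm by simp
      also have "\<dots> = e (p - 1) (j - 1) (d p (j - 1) \<beta> (d (Suc p) j \<beta> (?Z i \<alpha>)))"
        using dd[OF Zj(2) ik(1), of j \<alpha> \<beta>] zc[of i "Suc j" \<alpha> \<beta>] 3 ik jm by simp
      also have "\<dots> = d (Suc p) (k - 1) \<beta> (?W i \<alpha>)"
        using 3 Wlt[OF ik(1)] psi_j2F[OF Zi, of "j - 1"] psi_j2T[OF Zi, of "j - 1"] jj jm ik
        by (cases \<beta>) simp_all
      finally show ?thesis .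
    next
      case 4
      show ?thesis using 4 Wlt[OF ik(1)] Wgt[OF 4(2) ik(3)] psi_lt[OF Zk, of j i \<alpha>]
          psi_gt[OF Zi, of "j - 1" "k - 1" \<beta>] zc[OF ik] ik j1 jm by simp
    next
      case 5
      have "d (Suc p) i \<alpha> (?W k \<beta>) = d (Suc p) j \<beta> (?Z (Suc j) \<beta>)"
        using 5 Wj1 de_eq[OF d_closed[OF Zj(2) j1 jm] j1] jm by simp
      then show ?thesis using 5 WjF WjT zc[of j "Suc j"] j1 jm
          d_cp_minus[OF Zj(1) Zj(2) j1 jm t1] d_cp_plus[OF Zj(1) Zj(2) j1 jm t1]
          d_cp_minus[OF Zj(2) Zj(1) j1 jm t2] d_cp_plus[OF Zj(2) Zj(1) j1 jm t2]
        by (cases \<alpha>; cases \<beta>) simp_all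
    next
      case 6
      have jk: "j < k - 1" "k - 1 \<le> Suc p" using 6 ik by auto
      have jp: "j \<le> p" using 6 ik by simp
      have a: "d (Suc p) j \<gamma> (?Z k \<beta>) = d (Suc p) (k - 1) \<beta> (?Z j \<gamma>)" for \<gamma> using zc[of j k] 6 ik j1 by simp
      have b: "d (Suc p) (Suc j) \<gamma> (?Z k \<beta>) = d (Suc p) (k - 1) \<beta> (?Z (Suc j) \<gamma>)" for \<gamma> using zc[of "Suc j" k] 6 ik by simp
      show ?thesis
      proof (cases \<alpha>)
        case True
        then show ?thesis using 6 WjT Wgt[OF 6(2) ik(3)] psi_jT[OF Zk j1 jp] a b
            d_cp_gt[OF Zj(2) Zj(1) j1 jk t2, of \<beta>] by simp
      next
        case False
        then show ?thesis using 6 WjF Wgt[OF 6(2) ik(3)] psi_jF[OF Zk j1 jp] a b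
            d_cp_gt[OF Zj(1) Zj(2) j1 jk t1, of \<beta>] by simp
      qed
    next
      case 7
      have jk: "j < k - 1" "k - 1 \<le> Suc p" using 7 ik by auto
      have jp: "j \<le> p" using 7 ik by simp
      have "d (Suc p) (k - 1) \<beta> (?W i \<alpha>) = e (p - 1) j (d p (k - 2) \<beta> (d (Suc p) j \<alpha> (?Z (Suc j) \<alpha>)))"
        using 7 Wj1 de_gt[OF d_closed[OF Zj(2) j1 jm] j1 jk(1), of \<beta>] jk by (simp add: numeral_2_eq_2)
      also have "\<dots> = e (p - 1) j (d p j \<alpha> (d (Suc p) (Suc j) \<alpha> (?Z k \<beta>)))"
        using dd[OF Zj(2)[of \<alpha>] j1 jk(1) jk(2), of \<alpha> \<beta>] zc[of "Suc j" k \<alpha> \<beta>] 7 ik jk by (simp add: numeral_2_eq_2)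
      also have "\<dots> = d (Suc p) i \<alpha> (?W k \<beta>)"
        using 7 Wgt[OF 7(2) ik(3)] psi_j2F[OF Zk j1 jp] psi_j2T[OF Zk j1 jp] by (cases \<alpha>) simp_all
      finally show ?thesis by simp
    next
      case 8
      have jk: "Suc j < k - 1" "k - 1 \<le> Suc p" using 8 ik by auto
      have jp: "j \<le> p" using 8 ik by simp
      show ?thesis using 8 Wgt[of i \<alpha>] Wgt[of k \<beta>] ik psi_gt[OF Zk j1 jp, of i \<alpha>]
          psi_gt[OF Zi j1 jp jk, of \<beta>] zc[OF ik] by simp
    qed
  qed
  show ?thesis unfolding shells_def using WG WC by simp
qed

lemma fold_G: "x \<in> G (Suc m) \<Longrightarrow> \<forall>k\<in>set ks. 1 \<le> k \<and> k \<le> m \<Longrightarrow> fold (psi d gm cp (Suc m)) ks x \<in> G (Suc m)"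
proof (induction ks arbitrary: x)
  case (Cons k ks)
  then show ?case using psiG[of x m k] by simp
qed simp

lemma fold_bd: "x \<in> G (Suc m) \<Longrightarrow> \<forall>k\<in>set ks. 1 \<le> k \<and> k \<le> m \<Longrightarrow>
    bd d (Suc m) (fold (psi d gm cp (Suc m)) ks x) = fold (psi_sh d e gm cp (Suc m)) ks (bd d (Suc m) x)"
proof (induction ks arbitrary: x)
  case (Cons k ks)
  then show ?case using bd_psi[of x m k] psiG[of x m k] by simp
qed simp

lemma fold_shell: "z \<in> shells G d (Suc m) \<Longrightarrow> \<forall>k\<in>set ks. 1 \<le> k \<and> k \<le> m \<Longrightarrow>
    fold (psi_sh d e gm cp (Suc m)) ks z \<in> shells G d (Suc m)"
proof (induction ks arbitrary: z)
  case (Cons k ks)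
  then obtain p where p: "m = Suc p" by (cases m) auto
  have "psi_sh d e gm cp (Suc m) k z \<in> shells G d (Suc m)"
    using psi_sh_shell[of z p k] Cons.prems p by simp
  then show ?case using Cons by simp
qed simp

lemma fold_inj: "x \<in> G (Suc m) \<Longrightarrow> x' \<in> G (Suc m) \<Longrightarrow> \<forall>k\<in>set ks. 1 \<le> k \<and> k \<le> m \<Longrightarrow>
    bd d (Suc m) x = bd d (Suc m) x' \<Longrightarrow>
    fold (psi d gm cp (Suc m)) ks x = fold (psi d gm cp (Suc m)) ks x' \<Longrightarrow> x = x'"
proof (induction ks arbitrary: x x')
  case (Cons k ks)
  have k: "1 \<le> k" "k \<le> m" using Cons.prems by auto
  have "bd d (Suc m) (psi d gm cp (Suc m) k x) = bd d (Suc m) (psi d gm cp (Suc m) k x')"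
    using bd_psi[OF Cons.prems(1) k] bd_psi[OF Cons.prems(2) k] Cons.prems(4) by simp
  then have "psi d gm cp (Suc m) k x = psi d gm cp (Suc m) k x'"
    using Cons.IH[OF psiG[OF Cons.prems(1) k] psiG[OF Cons.prems(2) k]] Cons.prems by simp
  then show ?case using psi_inj[OF Cons.prems(1,2) k Cons.prems(4)] by simp
qed simp

lemma fold_surj: "z \<in> shells G d (Suc m) \<Longrightarrow> y \<in> G (Suc m) \<Longrightarrow> \<forall>k\<in>set ks. 1 \<le> k \<and> k \<le> m \<Longrightarrow>
    fold (psi_sh d e gm cp (Suc m)) ks z = bd d (Suc m) y \<Longrightarrow>
    \<exists>x\<in>G (Suc m). bd d (Suc m) x = z \<and> fold (psi d gm cp (Suc m)) ks x = y"
proof (induction ks arbitrary: z)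
  case Nil
  then show ?case by auto
next
  case (Cons k ks)
  have k: "1 \<le> k" "k \<le> m" using Cons.prems by auto
  obtain p where p: "m = Suc p" using k by (cases m) auto
  have zs: "psi_sh d e gm cp (Suc m) k z \<in> shells G d (Suc m)"
    using psi_sh_shell[of z p k] Cons.prems p k by simp
  obtain x' where x': "x' \<in> G (Suc m)" "bd d (Suc m) x' = psi_sh d e gm cp (Suc m) k z"
      "fold (psi d gm cp (Suc m)) ks x' = y"
    using Cons.IH[OF zs Cons.prems(2)] Cons.prems(3,4) by auto
  obtain x where x: "x \<in> G (Suc m)" "bd d (Suc m) x = z" "psi d gm cp (Suc m) k x = x'"
    using unfold_exists[OF Cons.prems(1) x'(1) k] x'(2) by metis
  show ?case using x x'(3) by auto
qed

lemma Phi_gen_fold: "Phi_gen f n = fold f (concat (map (\<lambda>r. [1..<r]) (rev [1..<Suc n])))"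
proof -
  have "\<And>L. fold (Psi_gen f) L = fold f (concat (map (\<lambda>r. [1..<r]) L))"
  proof -
    fix L :: "nat list"
    show "fold (Psi_gen f) L = fold f (concat (map (\<lambda>r. [1..<r]) L))"
      by (induction L) (simp_all add: Psi_gen_def del: upt_Suc)
  qed
  then show ?thesis unfolding Phi_gen_def by (simp del: upt_Suc)
qed

lemma idx_range: "k \<in> set (concat (map (\<lambda>r. [1..<r]) (rev [1..<Suc (Suc m)]))) \<Longrightarrow> 1 \<le> k \<and> k \<le> m"
  by (auto simp del: upt_Suc)

theorem main:
  assumes n: "1 \<le> n"
  shows "bij_betw (\<lambda>x. (bd d n x, Phi d gm cp n x)) (G n)
           {(z, y). z \<in> shells G d n \<and> y \<in> Phi d gm cp n ` G n \<and>
                    Phi_sh d e gm cp n z = bd d n y}"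
proof -
  obtain m where m: "n = Suc m" using n by (cases n) auto
  let ?ks = "concat (map (\<lambda>r. [1..<r]) (rev [1..<Suc (Suc m)]))"
  have ks: "\<forall>k\<in>set ?ks. 1 \<le> k \<and> k \<le> m" using idx_range by blast
  have P: "Phi d gm cp (Suc m) = fold (psi d gm cp (Suc m)) ?ks" unfolding Phi_def Phi_gen_fold ..
  have PS: "Phi_sh d e gm cp (Suc m) = fold (psi_sh d e gm cp (Suc m)) ?ks" unfolding Phi_sh_def Phi_gen_fold ..
  show ?thesis unfolding m bij_betw_def
  proof
    show "inj_on (\<lambda>x. (bd d (Suc m) x, Phi d gm cp (Suc m) x)) (G (Suc m))"
      unfolding inj_on_def P using fold_inj[OF _ _ ks] by blast
  next
    show "(\<lambda>x. (bd d (Suc m) x, Phi d gm cp (Suc m) x)) ` G (Suc m) =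
      {(z, y). z \<in> shells G d (Suc m) \<and> y \<in> Phi d gm cp (Suc m) ` G (Suc m) \<and>
               Phi_sh d e gm cp (Suc m) z = bd d (Suc m) y}"
    proof (intro equalityI subsetI)
      fix p assume "p \<in> (\<lambda>x. (bd d (Suc m) x, Phi d gm cp (Suc m) x)) ` G (Suc m)"
      then obtain x where x: "x \<in> G (Suc m)" and p: "p = (bd d (Suc m) x, Phi d gm cp (Suc m) x)" by auto
      have "bd d (Suc m) x \<in> shells G d (Suc m)" using bd_shell[OF x] by simp
      moreover have "Phi_sh d e gm cp (Suc m) (bd d (Suc m) x) = bd d (Suc m) (Phi d gm cp (Suc m) x)"
        unfolding P PS using fold_bd[OF x ks] by simp
      ultimately show "p \<in> {(z, y). z \<in> shells G d (Suc m) \<and> y \<in> Phi d gm cp (Suc m) ` G (Suc m) \<and>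
               Phi_sh d e gm cp (Suc m) z = bd d (Suc m) y}" using p x by auto
    next
      fix p assume "p \<in> {(z, y). z \<in> shells G d (Suc m) \<and> y \<in> Phi d gm cp (Suc m) ` G (Suc m) \<and>
               Phi_sh d e gm cp (Suc m) z = bd d (Suc m) y}"
      then obtain z y where p: "p = (z, y)" and z: "z \<in> shells G d (Suc m)"
        and y: "y \<in> Phi d gm cp (Suc m) ` G (Suc m)" and zy: "Phi_sh d e gm cp (Suc m) z = bd d (Suc m) y" by auto
      have yG: "y \<in> G (Suc m)" using y fold_G[OF _ ks] unfolding P by auto
      obtain x where "x \<in> G (Suc m)" "bd d (Suc m) x = z" "fold (psi d gm cp (Suc m)) ?ks x = y"
        using fold_surj[OF z yG ks] zy unfolding PS by auto
      then show "p \<in> (\<lambda>x. (bd d (Suc m) x, Phi d gm cp (Suc m) x)) ` G (Suc m)"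
        unfolding P p by auto
    qed
  qed
qed

end


theorem theorem8p5:
  fixes G :: "nat \<Rightarrow> 'a set"
    and d :: "nat \<Rightarrow> nat \<Rightarrow> bool \<Rightarrow> 'a \<Rightarrow> 'a"
    and e :: "nat \<Rightarrow> nat \<Rightarrow> 'a \<Rightarrow> 'a"
    and gm :: "nat \<Rightarrow> nat \<Rightarrow> bool \<Rightarrow> 'a \<Rightarrow> 'a"
    and cp :: "nat \<Rightarrow> nat \<Rightarrow> 'a \<Rightarrow> 'a \<Rightarrow> 'a"
    and n :: nat
  assumes "cubical_conn G d e gm cp"
    and "1 \<le> n"
  shows "bij_betw (\<lambda>x. (bd d n x, Phi d gm cp n x)) (G n)
           {(z, y). z \<in> shells G d n \<and> y \<in> Phi d gm cp n ` G n \<and>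
                    Phi_sh d e gm cp n z = bd d n y}"
  using cubical_conn.main[OF assms] .

end
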